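(* Let $t$ be the number of erroneous nodes in the distributed storage system built from the concatenation of an MRD code and an optimal repair MDS array code, as described in the context. If $2t\alpha+1\leq \delta$, then the original data can be recovered from any $k$ nodes.
   Context: A file of size $M=KN$ over $\mathbb{F}_q$ (with $K<N$) is arranged as an $N\times K$ matrix $\mathcal{M}$ over $\mathbb{F}_q$. Let $\mathcal{C}$ be an $[N\times m, NK, \delta=m-K+1]$ Gabidulin maximum rank distance (MRD) code with $m\leq N$, whose codewords are viewed as vectors in $\mathbb{F}_{q^N}^m$; let $\mathbf{c}_{\mathcal{M}}\in\mathbb{F}_{q^N}^m$ be the codeword corresponding to $\mathcal{M}$. Let $\alpha,k$ be positive integers with $m=\alpha k$, and set $Q=q^N$. Let $C$ be an $(n,k)$ optimal repair MDS array code of dimensions $\alpha\times n$ whose generator matrix (a $k\times n$ block matrix of $\alpha\times\alpha$ blocks) is over $\mathbb{F}_q$, and whose node repairs use $\mathbb{F}_q$-linear combinations of stored symbols; here an MDS array code means any $k$ nodes suffice to recover the encoded data, and optimal repair means a failed node can be repaired by downloading $\alpha d/(d-k+1)$ symbols from each node in any set of $d\ge k$ surviving nodes. The vector $\mathbf{c}_{\mathcal{M}}$ is split into $k$ blocks of size $\alpha$ and encoded with $C$ into $n$ nodes each storing $\alpha$ symbols of $\mathbb{F}_Q$. Errors are static: an adversary replaces the content of each of the $t$ affected nodes (adds an arbitrary error vector in $\mathbb{F}_Q^\alpha$) only once, and the affected node uses this same polluted content in all subsequent repair and data-collection processes; repairs are performed obliviously, so errors may propagate to repaired nodes. *)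

theory Defs
  imports Main
begin

text \<open>The big field F_Q (Q = q^N) is a finite field type 'f with CARD('f) = q^N;
  the subfield F_q is the fixed field of the Frobenius x \<mapsto> x^q.\<close>
definition Fq :: "nat \<Rightarrow> 'f::field set" where
  "Fq q = {x. x ^ q = x}"

definition Fq_indep :: "nat \<Rightarrow> nat \<Rightarrow> (nat \<Rightarrow> 'f::field) \<Rightarrow> bool" where
  "Fq_indep q m g \<longleftrightarrow>
     (\<forall>c. (\<forall>i<m. c i \<in> Fq q) \<and> (\<Sum>i<m. c i * g i) = 0 \<longrightarrow> (\<forall>i<m. c i = 0))"

definition gab_enc :: "nat \<Rightarrow> nat \<Rightarrow> (nat \<Rightarrow> 'f::field) \<Rightarrow> (nat \<Rightarrow> 'f) \<Rightarrow> nat \<Rightarrow> 'f" where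
  "gab_enc q K g u = (\<lambda>i. \<Sum>j<K. u j * g i ^ (q ^ j))"

text \<open>Array code encoding: data vector c in F_Q^{k alpha} (k blocks of size alpha),
  generator G of size (k alpha) x (n alpha); node j stores positions j*alpha..j*alpha+alpha-1.\<close>
definition arr_enc :: "nat \<Rightarrow> nat \<Rightarrow> (nat \<Rightarrow> nat \<Rightarrow> 'f::field) \<Rightarrow> (nat \<Rightarrow> 'f) \<Rightarrow> nat \<Rightarrow> nat \<Rightarrow> 'f" where
  "arr_enc \<alpha> k G c = (\<lambda>j a. \<Sum>r<k * \<alpha>. c r * G r (j * \<alpha> + a))"

definition MDS_array :: "nat \<Rightarrow> nat \<Rightarrow> nat \<Rightarrow> (nat \<Rightarrow> nat \<Rightarrow> 'f::field) \<Rightarrow> bool" where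
  "MDS_array n k \<alpha> G \<longleftrightarrow>
     (\<forall>S. S \<subseteq> {..<n} \<and> card S = k \<longrightarrow>
        (\<forall>c c'. (\<forall>j\<in>S. \<forall>a<\<alpha>. arr_enc \<alpha> k G c j a = arr_enc \<alpha> k G c' j a)
               \<longrightarrow> (\<forall>r<k * \<alpha>. c r = c' r)))"

text \<open>Output of a repair of node i from helper set D: helper h sends the beta symbols
  sum_b Sdl i D h l b * x h b (l < beta); the newcomer forms F_q-linear combinations
  of the received symbols with coefficients Rec i D h a l.\<close>
definition repair_out ::
  "nat \<Rightarrow> nat \<Rightarrow> (nat \<Rightarrow> nat set \<Rightarrow> nat \<Rightarrow> nat \<Rightarrow> nat \<Rightarrow> 'f::field)
   \<Rightarrow> (nat \<Rightarrow> nat set \<Rightarrow> nat \<Rightarrow> nat \<Rightarrow> nat \<Rightarrow> 'f) \<Rightarrow> nat \<Rightarrow> nat set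
   \<Rightarrow> (nat \<Rightarrow> nat \<Rightarrow> 'f) \<Rightarrow> nat \<Rightarrow> 'f" where
  "repair_out \<alpha> \<beta> Sdl Rec i D x =
     (\<lambda>a. \<Sum>h\<in>D. \<Sum>l<\<beta>. Rec i D h a l * (\<Sum>b<\<alpha>. Sdl i D h l b * x h b))"

definition opt_repair ::
  "nat \<Rightarrow> nat \<Rightarrow> nat \<Rightarrow> nat \<Rightarrow> nat \<Rightarrow> nat \<Rightarrow> (nat \<Rightarrow> nat \<Rightarrow> 'f::field)
   \<Rightarrow> (nat \<Rightarrow> nat set \<Rightarrow> nat \<Rightarrow> nat \<Rightarrow> nat \<Rightarrow> 'f)
   \<Rightarrow> (nat \<Rightarrow> nat set \<Rightarrow> nat \<Rightarrow> nat \<Rightarrow> nat \<Rightarrow> 'f) \<Rightarrow> bool" where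
  "opt_repair q n k \<alpha> d \<beta> G Sdl Rec \<longleftrightarrow>
     k \<le> d \<and> d < n \<and> \<beta> * (d - k + 1) = \<alpha> \<and>
     (\<forall>i D h l b. Sdl i D h l b \<in> Fq q) \<and> (\<forall>i D h a l. Rec i D h a l \<in> Fq q) \<and>
     (\<forall>c i D. i < n \<and> D \<subseteq> {..<n} - {i} \<and> card D = d \<longrightarrow>
        (\<forall>a<\<alpha>. repair_out \<alpha> \<beta> Sdl Rec i D (arr_enc \<alpha> k G c) a = arr_enc \<alpha> k G c i a))"

text \<open>Reachable system states (x = node contents, A = set of nodes hit by the adversary),
  starting from the correct contents x0. An adversary adds an arbitrary error vector
  to a node at most once; repairs are performed obliviously with the repair scheme.\<close>
inductive reach ::
  "nat \<Rightarrow> nat \<Rightarrow> nat \<Rightarrow> nat \<Rightarrow> (nat \<Rightarrow> nat set \<Rightarrow> nat \<Rightarrow> nat \<Rightarrow> nat \<Rightarrow> 'f::field)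
   \<Rightarrow> (nat \<Rightarrow> nat set \<Rightarrow> nat \<Rightarrow> nat \<Rightarrow> nat \<Rightarrow> 'f) \<Rightarrow> (nat \<Rightarrow> nat \<Rightarrow> 'f)
   \<Rightarrow> (nat \<Rightarrow> nat \<Rightarrow> 'f) \<Rightarrow> nat set \<Rightarrow> bool"
  for n d \<alpha> \<beta> Sdl Rec x0 where
  init: "reach n d \<alpha> \<beta> Sdl Rec x0 x0 {}"
| inject: "reach n d \<alpha> \<beta> Sdl Rec x0 x A \<Longrightarrow> j < n \<Longrightarrow> j \<notin> A \<Longrightarrow>
      reach n d \<alpha> \<beta> Sdl Rec x0 (x(j := (\<lambda>a. x j a + e a))) (insert j A)"
| repair: "reach n d \<alpha> \<beta> Sdl Rec x0 x A \<Longrightarrow> i < n \<Longrightarrow> D \<subseteq> {..<n} - {i} \<Longrightarrow>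
      card D = d \<Longrightarrow>
      reach n d \<alpha> \<beta> Sdl Rec x0 (x(i := repair_out \<alpha> \<beta> Sdl Rec i D x)) A"

end

theory Submission
  imports Defs "HOL-Computational_Algebra.Polynomial" "HOL-Computational_Algebra.Primes"
    "HOL-Number_Theory.Prime_Powers" "HOL-Number_Theory.Cong" "HOL-Library.FuncSet"
begin


lemma ff_prime_char: "prime CHAR('f::{finite,field})"
  by (rule prime_CHAR_semidom) (rule finite_imp_CHAR_pos, simp)

fun sp :: "nat \<Rightarrow> 'f::field list \<Rightarrow> 'f set" where
  "sp p [] = {0}"
| "sp p (x # xs) = (\<lambda>(s,i). s + of_nat i * x) ` (sp p xs \<times> {..<p})"

lemma of_nat_mod_char: "(of_nat (n mod CHAR('f)) :: 'f::field) = of_nat n"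
  by (simp add: of_nat_eq_iff_cong_CHAR cong_def)

lemma sp0: "(0::'f::{finite,field}) \<in> sp CHAR('f) xs"
proof (induction xs)
  case (Cons x xs)
  have "0 < CHAR('f)" using prime_gt_0_nat[OF ff_prime_char] by simp
  then have "(0::'f, 0::nat) \<in> sp CHAR('f) xs \<times> {..<CHAR('f)}" using Cons by auto
  then show ?case by (force simp: image_iff)
qed simp

lemma sp_add: "a \<in> sp CHAR('f) xs \<Longrightarrow> b \<in> sp CHAR('f) xs \<Longrightarrow> (a + b :: 'f::{finite,field}) \<in> sp CHAR('f) xs"
proof (induction xs arbitrary: a b)
  case Nil then show ?case by simp
next
  case (Cons x xs)
  from Cons.prems obtain s i s' j where h: "s \<in> sp CHAR('f) xs" "s' \<in> sp CHAR('f) xs"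
    "i < CHAR('f)" "j < CHAR('f)" "a = s + of_nat i * x" "b = s' + of_nat j * x" by auto
  have p0: "0 < CHAR('f)" using prime_gt_0_nat[OF ff_prime_char] by simp
  have "a + b = (s + s') + of_nat ((i + j) mod CHAR('f)) * x"
    using h by (simp add: of_nat_mod_char algebra_simps)
  moreover have "(s + s', (i+j) mod CHAR('f)) \<in> sp CHAR('f) xs \<times> {..<CHAR('f)}"
    using Cons.IH h p0 by auto
  ultimately show ?case by (force simp: image_iff)
qed

lemma sp_smul: "a \<in> sp CHAR('f) xs \<Longrightarrow> (of_nat n * a :: 'f::{finite,field}) \<in> sp CHAR('f) xs"
  by (induction n) (auto simp: sp0 sp_add distrib_right)

lemma of_nat_fermat: "(of_nat n :: 'f::{finite,field}) ^ CHAR('f) = of_nat n"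
proof (induction n)
  case 0 then show ?case using prime_gt_0_nat[OF ff_prime_char] by (simp add: power_0_left)
next
  case (Suc n)
  have "(1 + of_nat n :: 'f) ^ CHAR('f) = 1 ^ CHAR('f) + of_nat n ^ CHAR('f)"
    by (rule freshmans_dream[OF ff_prime_char refl])
  then show ?case using Suc by simp
qed

lemma sp_card: "\<exists>e. card (sp CHAR('f) (xs :: 'f::{finite,field} list)) = CHAR('f) ^ e"
proof (induction xs)
  case Nil then show ?case by (intro exI[of _ 0]) simp
next
  case (Cons x xs)
  define p where "p = CHAR('f)"
  have pp: "prime p" unfolding p_def by (rule ff_prime_char)
  then have p2: "2 \<le> p" by (simp add: prime_ge_2_nat)
  from Cons obtain e where e: "card (sp p xs) = p ^ e" unfolding p_def by blast
  show ?case
  proof (cases "x \<in> sp p xs")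
    case True
    have "sp p (x # xs) = sp p xs"
    proof
      show "sp p (x # xs) \<subseteq> sp p xs"
      proof
        fix z assume "z \<in> sp p (x # xs)"
        then obtain s i where "s \<in> sp p xs" "z = s + of_nat i * x" by auto
        then show "z \<in> sp p xs" using True unfolding p_def
          by (simp add: sp_add sp_smul)
      qed
      show "sp p xs \<subseteq> sp p (x # xs)"
      proof
        fix s assume "s \<in> sp p xs"
        then have "(s, 0) \<in> sp p xs \<times> {..<p}" using p2 by auto
        then show "s \<in> sp p (x # xs)" by (force simp: image_iff)
      qed
    qed
    then have "card (sp p (x # xs)) = p ^ e" using e by simp
    then show ?thesis unfolding p_def by (rule exI)
  next
    case False
    have inj: "inj_on (\<lambda>(s,i). s + of_nat i * x) (sp p xs \<times> {..<p})"
    proof (rule inj_onI, clarify)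
      fix s i s' j assume h: "s \<in> sp p xs" "i < p" "s' \<in> sp p xs" "j < p"
        "s + of_nat i * x = s' + of_nat j * x"
      show "s = s' \<and> i = j"
      proof (cases "i = j")
        case True then show ?thesis using h by simp
      next
        case ij: False
        define c :: 'f where "c = of_nat (i + (p - 1) * j)"
        have "i + (p - 1) * j + j = i + p * j" using p2 by (cases p) auto
        then have "c + of_nat j = of_nat i + of_nat p * of_nat j" unfolding c_def
          by (metis of_nat_add of_nat_mult)
        then have c_eq: "c = of_nat i - of_nat j" by (simp add: p_def algebra_simps)
        have cne: "c \<noteq> 0"
        proof
          assume "c = 0"
          then have "(of_nat i :: 'f) = of_nat j" using c_eq by simp
          then have "[i = j] (mod p)" unfolding p_def by (simp add: of_nat_eq_iff_cong_CHAR)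
          then show False using ij h by (simp add: cong_def)
        qed
        have "of_nat i * x - of_nat j * x = s' - s" using h(5)
          by (simp add: algebra_simps eq_diff_eq diff_eq_eq)
        then have cx: "c * x = s' - s" by (simp add: c_eq left_diff_distrib)
        have "s' - s \<in> sp p xs"
        proof -
          have "- s = of_nat (p - 1) * s"
          proof -
            have "of_nat (p - 1) * s + s = of_nat p * s" using p2
              by (simp add: of_nat_diff algebra_simps)
            then have "of_nat (p - 1) * s + s = 0" by (simp add: p_def)
            then show ?thesis by (metis add.commute add_eq_0_iff)
          qed
          then have "s' - s = s' + of_nat (p - 1) * s" by simp
          also have "\<dots> \<in> sp p xs" unfolding p_def
            by (rule sp_add[OF _ sp_smul]) (use h in \<open>auto simp: p_def\<close>)
          finally show ?thesis .
        qed
        have cinv: "c ^ (p - 2) * c = 1"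
        proof -
          have "c ^ p = c" unfolding c_def p_def by (rule of_nat_fermat)
          moreover have "c ^ p = c ^ (p - 2) * c * c"
          proof -
            have "c ^ p = c ^ (p - 2 + 2)" by (simp only: le_add_diff_inverse2[OF p2])
            also have "\<dots> = c ^ (p - 2) * c * c"
              by (simp only: power_add power2_eq_square mult.assoc)
            finally show ?thesis .
          qed
          ultimately have "(c ^ (p - 2) * c) * c = 1 * c" by simp
          then show ?thesis using mult_right_cancel[OF cne] by blast
        qed
        have "x = (c ^ (p - 2) * c) * x" using cinv by simp
        also have "\<dots> = c ^ (p - 2) * (c * x)" by (simp only: mult.assoc)
        finally have "x = c ^ (p - 2) * (s' - s)" using cx by simp
        then have "x = of_nat ((i + (p - 1) * j) ^ (p - 2)) * (s' - s)"
          unfolding c_def by (simp only: of_nat_power)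
        then have "x \<in> sp p xs" using \<open>s' - s \<in> sp p xs\<close> unfolding p_def
          by (simp only:) (rule sp_smul)
        then show ?thesis using False by simp
      qed
    qed
    have "card (sp p (x # xs)) = card (sp p xs \<times> {..<p})"
      unfolding sp.simps(2) by (rule card_image[OF inj])
    also have "\<dots> = p ^ Suc e" using e by (simp add: card_cartesian_product)
    finally have "card (sp p (x # xs)) = p ^ Suc e" .
    then show ?thesis unfolding p_def by (rule exI)
  qed
qed

lemma sp_mem: "(x::'f::{finite,field}) \<in> set xs \<Longrightarrow> x \<in> sp CHAR('f) xs"
proof (induction xs)
  case Nil then show ?case by simp
next
  case (Cons y xs)
  have p2: "2 \<le> CHAR('f)" using ff_prime_char[where 'f='f] by (rule prime_ge_2_nat)
  show ?case
  proof (cases "x = y")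
    case True
    have "(0, 1) \<in> sp CHAR('f) xs \<times> {..<CHAR('f)}" using p2 sp0[where 'f='f] by simp
    moreover have "x = (\<lambda>(s,i). s + of_nat i * y) (0, 1)" using True by simp
    ultimately show ?thesis unfolding sp.simps(2) by (rule rev_image_eqI)
  next
    case False
    then have "x \<in> sp CHAR('f) xs" using Cons by simp
    then have "(x, 0) \<in> sp CHAR('f) xs \<times> {..<CHAR('f)}" using p2 by simp
    moreover have "x = (\<lambda>(s,i). s + of_nat i * y) (x, 0)" by simp
    ultimately show ?thesis unfolding sp.simps(2) by (rule rev_image_eqI)
  qed
qed

lemma card_char_power: "\<exists>e. card (UNIV :: 'f::{finite,field} set) = CHAR('f) ^ e"
proof -
  obtain xs :: "'f list" where xs: "set xs = UNIV" using finite_list[OF finite_UNIV] by blast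
  have "\<And>x. x \<in> sp CHAR('f) xs" using xs by (intro sp_mem) simp
  then have "sp CHAR('f) xs = UNIV" by blast
  moreover obtain e where "card (sp CHAR('f) xs) = CHAR('f) ^ e" using sp_card by blast
  ultimately have "card (UNIV :: 'f set) = CHAR('f) ^ e" by simp
  then show ?thesis by (rule exI)
qed

lemma q_char_power:
  assumes "card (UNIV :: 'f::{finite,field} set) = q ^ N" "0 < N"
  shows "\<exists>f. q = CHAR('f) ^ f"
proof -
  obtain e where "card (UNIV :: 'f set) = CHAR('f) ^ e" using card_char_power by blast
  then have "q ^ N = CHAR('f) ^ e" using assms(1) by simp
  then have "\<exists>i. normalize q = normalize (CHAR('f) ^ i)"
    by (rule power_eq_prime_powerD[OF ff_prime_char assms(2)])
  then show ?thesis by simp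
qed


lemma frob_add:
  assumes qp: "q = CHAR('f::{finite,field}) ^ e"
  shows "((x::'f) + y) ^ (q ^ j) = x ^ (q ^ j) + y ^ (q ^ j)"
proof -
  have "q ^ j = CHAR('f) ^ (e * j)" using qp by (simp add: power_mult)
  then show ?thesis by (intro freshmans_dream'[OF ff_prime_char])
qed

lemma frob_sum:
  assumes qp: "q = CHAR('f::{finite,field}) ^ e"
  shows "(\<Sum>i\<in>I. h i :: 'f) ^ (q ^ j) = (\<Sum>i\<in>I. h i ^ (q ^ j))"
proof -
  have "q ^ j = CHAR('f) ^ (e * j)" using qp by (simp add: power_mult)
  then show ?thesis by (intro freshmans_dream_sum'[OF ff_prime_char])
qed

lemma frob_diff:
  assumes qp: "q = CHAR('f::{finite,field}) ^ e"
  shows "((x::'f) - y) ^ (q ^ j) = x ^ (q ^ j) - y ^ (q ^ j)"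
proof -
  have "x ^ (q ^ j) = ((x - y) + y) ^ (q ^ j)" by simp
  also have "\<dots> = (x - y) ^ (q ^ j) + y ^ (q ^ j)" by (rule frob_add[OF qp])
  finally show ?thesis by simp
qed

lemma q_pos: "q = CHAR('f::{finite,field}) ^ e \<Longrightarrow> 0 < q"
  using prime_gt_0_nat[OF ff_prime_char[where 'f='f]] by simp

lemma Fq_pow:
  assumes "(x::'f::field) \<in> Fq q" shows "x ^ (q ^ j) = x"
proof (induction j)
  case 0 then show ?case by simp
next
  case (Suc j)
  have "x ^ (q ^ Suc j) = (x ^ (q ^ j)) ^ q" by (simp add: power_mult[symmetric] mult.commute)
  then show ?case using Suc assms by (simp add: Fq_def)
qed

lemma Fq_add:
  assumes qp: "q = CHAR('f::{finite,field}) ^ e" and "(x::'f) \<in> Fq q" "y \<in> Fq q"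
  shows "x + y \<in> Fq q"
  using frob_add[OF qp, of x y 1] assms by (simp add: Fq_def)

lemma Fq_diff:
  assumes qp: "q = CHAR('f::{finite,field}) ^ e" and "(x::'f) \<in> Fq q" "y \<in> Fq q"
  shows "x - y \<in> Fq q"
  using frob_diff[OF qp, of x y 1] assms by (simp add: Fq_def)

lemma Fq_mult:
  assumes "(x::'f::field) \<in> Fq q" "y \<in> Fq q"
  shows "x * y \<in> Fq q"
  using assms by (simp add: Fq_def power_mult_distrib)

lemma Fq_zero:
  assumes qp: "q = CHAR('f::{finite,field}) ^ e"
  shows "(0::'f) \<in> Fq q"
  using q_pos[OF qp] by (simp add: Fq_def)

lemma Fq_neg:
  assumes qp: "q = CHAR('f::{finite,field}) ^ e" and "(x::'f) \<in> Fq q"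
  shows "- x \<in> Fq q"
  using Fq_diff[OF qp Fq_zero[OF qp] assms(2)] by simp

lemma lin_poly:
  fixes w :: "nat \<Rightarrow> 'a::comm_semiring_1"
  shows "poly (\<Sum>j<K. monom (w j) (q ^ j)) x = (\<Sum>j<K. w j * x ^ (q ^ j))"
  by (simp add: poly_sum poly_monom)

lemma lin_roots:
  fixes w :: "nat \<Rightarrow> 'f::field"
  assumes q2: "2 \<le> q" and j0: "j0 < K" "w j0 \<noteq> 0"
  shows "card {x. (\<Sum>j<K. w j * x ^ (q ^ j)) = 0} \<le> q ^ (K - 1)"
proof -
  define P where "P = (\<Sum>j<K. monom (w j) (q ^ j))"
  have inj: "inj (\<lambda>j::nat. q ^ j)" using q2 by (intro injI) (simp add: power_inject_exp)
  have "coeff P (q ^ j0) = (\<Sum>j<K. if q ^ j = q ^ j0 then w j else 0)"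
    unfolding P_def by (simp add: coeff_sum coeff_monom)
  also have "\<dots> = (\<Sum>j<K. if j = j0 then w j else 0)"
    using inj by (intro sum.cong refl) (auto dest: injD)
  also have "\<dots> = w j0" using j0 by simp
  finally have "P \<noteq> 0" using j0 by auto
  have "degree P \<le> q ^ (K - 1)"
    unfolding P_def
  proof (rule degree_sum_le)
    show "finite {..<K}" by simp
    show "\<And>j. j \<in> {..<K} \<Longrightarrow> degree (monom (w j) (q ^ j)) \<le> q ^ (K - 1)"
      using q2 by (intro order.trans[OF degree_monom_le] power_increasing) auto
  qed
  have "{x. (\<Sum>j<K. w j * x ^ (q ^ j)) = 0} = {x. poly P x = 0}"
    unfolding P_def lin_poly ..
  also have "card \<dots> \<le> degree P" by (rule card_poly_roots_bound[OF \<open>P \<noteq> 0\<close>])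
  finally show ?thesis using \<open>degree P \<le> _\<close> by simp
qed


lemma ff_power_card: "(x::'f::{finite,field}) ^ card (UNIV :: 'f set) = x"
proof (cases "x = 0")
  case False
  have "x * (\<Prod>y\<in>UNIV-{0}. x * y) = x * x ^ (card (UNIV :: 'f set) - 1) * \<Prod>(UNIV-{0})"
    by (simp add: prod.distrib mult_ac)
  also have "x * x ^ (card (UNIV :: 'f set) - 1) = x ^ Suc (card (UNIV :: 'f set) - 1)"
    by (subst power_Suc) auto
  also have "Suc (card (UNIV :: 'f set) - 1) = card (UNIV :: 'f set)"
    using finite_UNIV_card_ge_0[where ?'a = 'f] by simp
  also have "(\<Prod>y\<in>UNIV-{0}. x * y) = (\<Prod>y\<in>UNIV-{0}. y)"
    by (rule prod.reindex_bij_witness[of _ "\<lambda>y. y / x" "\<lambda>y. x * y"]) (use False in auto)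
  finally show ?thesis
    by simp
qed (use finite_UNIV_card_ge_0[where ?'a = 'f] in auto)

lemma card_ge2: "2 \<le> card (UNIV :: 'f::{finite,field} set)"
proof -
  have "{0::'f, 1} \<subseteq> UNIV" by simp
  then have "card {0::'f, 1} \<le> card (UNIV :: 'f set)" by (intro card_mono) auto
  then show ?thesis by simp
qed

lemma q_ge2:
  assumes "card (UNIV :: 'f::{finite,field} set) = q ^ N"
  shows "2 \<le> q"
proof (rule ccontr)
  assume "\<not> 2 \<le> q"
  then have "q = 0 \<or> q = 1" by auto
  then have "q ^ N \<le> 1" by (cases N) auto
  then show False using card_ge2[where 'f='f] assms by simp
qed

lemma card_Fq_ge:
  assumes card: "card (UNIV :: 'f::{finite,field} set) = q ^ N" and N: "0 < N"
    and qp: "q = CHAR('f) ^ e"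
  shows "q \<le> card (Fq q :: 'f set)"
proof -
  have q2: "2 \<le> q" by (rule q_ge2[OF card])
  define \<phi> :: "'f \<Rightarrow> 'f" where "\<phi> x = x ^ q - x" for x
  have q1: "q ^ 1 = q" by simp
  have tr: "(\<Sum>j<N. 1 * (\<phi> x) ^ (q ^ j)) = 0" for x
  proof -
    have "(\<Sum>j<N. 1 * (\<phi> x) ^ (q ^ j)) = (\<Sum>j<N. x ^ (q ^ Suc j) - x ^ (q ^ j))"
      unfolding \<phi>_def
      by (intro sum.cong refl) (simp add: frob_diff[OF qp] power_mult[symmetric] mult.commute)
    also have "\<dots> = x ^ (q ^ N) - x"
      by (subst sum_lessThan_telescope) simp
    also have "\<dots> = 0" using ff_power_card[of x] card by simp
    finally show ?thesis .
  qed
  have img: "range \<phi> \<subseteq> {y. (\<Sum>j<N. 1 * y ^ (q ^ j)) = 0}" using tr by auto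
  have cimg: "card (range \<phi>) \<le> q ^ (N - 1)"
    by (rule order.trans[OF card_mono[OF _ img] lin_roots[OF q2, of 0 N]]) (use N in auto)
  have fib: "card {x. \<phi> x = y} \<le> card (Fq q :: 'f set)" if "y \<in> range \<phi>" for y
  proof -
    obtain x0 where x0: "y = \<phi> x0" using \<open>y \<in> range \<phi>\<close> by blast
    have "{x. \<phi> x = y} \<subseteq> (\<lambda>k. x0 + k) ` Fq q"
    proof
      fix x assume "x \<in> {x. \<phi> x = y}"
      then have "\<phi> x = \<phi> x0" using x0 by simp
      then have h: "x ^ q - x = x0 ^ q - x0" unfolding \<phi>_def .
      have "(x - x0) ^ q = x ^ q - x0 ^ q" using frob_diff[OF qp, of x x0 1] by simp
      also have "\<dots> = x - x0" using h by (simp add: algebra_simps eq_diff_eq diff_eq_eq)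
      finally have "(x - x0) ^ q = x - x0" .
      then have "x - x0 \<in> Fq q" by (simp add: Fq_def)
      then show "x \<in> (\<lambda>k. x0 + k) ` Fq q" by (intro rev_image_eqI[of "x - x0"]) auto
    qed
    then have "card {x. \<phi> x = y} \<le> card ((\<lambda>k. x0 + k) ` Fq q)" by (intro card_mono) auto
    also have "\<dots> \<le> card (Fq q :: 'f set)" by (rule card_image_le) auto
    finally show ?thesis .
  qed
  have "(\<Union>y\<in>range \<phi>. {x. \<phi> x = y}) = UNIV" by auto
  then have "q ^ N = card (\<Union>y\<in>range \<phi>. {x. \<phi> x = y})" using card by simp
  also have "\<dots> \<le> (\<Sum>y\<in>range \<phi>. card {x. \<phi> x = y})" by (rule card_UN_le) auto
  also have "\<dots> \<le> (\<Sum>y\<in>range \<phi>. card (Fq q :: 'f set))" by (rule sum_mono) (rule fib)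
  also have "\<dots> = card (range \<phi>) * card (Fq q :: 'f set)" by simp
  also have "\<dots> \<le> q ^ (N - 1) * card (Fq q :: 'f set)" using cimg by (rule mult_right_mono) simp
  finally have "q ^ N \<le> q ^ (N - 1) * card (Fq q :: 'f set)" .
  moreover have "q ^ N = q ^ (N - 1) * q" using N by (cases N) auto
  ultimately have "q ^ (N - 1) * q \<le> q ^ (N - 1) * card (Fq q :: 'f set)" by simp
  then show ?thesis using q2 by simp
qed


definition span :: "nat \<Rightarrow> 'f::field set \<Rightarrow> 'f set" where
  "span q W = {v. \<exists>c. (\<forall>w\<in>W. c w \<in> Fq q) \<and> v = (\<Sum>w\<in>W. c w * w)}"

context
  fixes q e :: nat
  assumes qp: "q = CHAR('f::{finite,field}) ^ e"
begin

lemma Fq_one: "(1::'f) \<in> Fq q" by (simp add: Fq_def)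

lemma span_zero: "(0::'f) \<in> span q W"
  unfolding span_def using Fq_zero[OF qp]
  by (intro CollectI exI[of _ "\<lambda>_. 0"]) auto

lemma span_add: "(a::'f) \<in> span q W \<Longrightarrow> b \<in> span q W \<Longrightarrow> a + b \<in> span q W"
  unfolding span_def
proof (clarify)
  fix c c' :: "'f \<Rightarrow> 'f" assume "\<forall>w\<in>W. c w \<in> Fq q" "\<forall>w\<in>W. c' w \<in> Fq q"
  then show "\<exists>c''. (\<forall>w\<in>W. c'' w \<in> Fq q) \<and>
    (\<Sum>w\<in>W. c w * (w::'f)) + (\<Sum>w\<in>W. c' w * w) = (\<Sum>w\<in>W. c'' w * w)"
    by (intro exI[of _ "\<lambda>w. c w + c' w"]) (auto intro: Fq_add[OF qp] simp: sum.distrib distrib_right)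
qed

lemma span_diff: "(a::'f) \<in> span q W \<Longrightarrow> b \<in> span q W \<Longrightarrow> a - b \<in> span q W"
  unfolding span_def
proof (clarify)
  fix c c' :: "'f \<Rightarrow> 'f" assume "\<forall>w\<in>W. c w \<in> Fq q" "\<forall>w\<in>W. c' w \<in> Fq q"
  then show "\<exists>c''. (\<forall>w\<in>W. c'' w \<in> Fq q) \<and>
    (\<Sum>w\<in>W. c w * (w::'f)) - (\<Sum>w\<in>W. c' w * w) = (\<Sum>w\<in>W. c'' w * w)"
    by (intro exI[of _ "\<lambda>w. c w - c' w"]) (auto intro: Fq_diff[OF qp] simp: sum_subtractf left_diff_distrib)
qed

lemma span_smul: "(a::'f) \<in> span q W \<Longrightarrow> r \<in> Fq q \<Longrightarrow> r * a \<in> span q W"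
  unfolding span_def
proof (clarify)
  fix c :: "'f \<Rightarrow> 'f" assume "\<forall>w\<in>W. c w \<in> Fq q" "r \<in> Fq q"
  then show "\<exists>c''. (\<forall>w\<in>W. c'' w \<in> Fq q) \<and>
    r * (\<Sum>w\<in>W. c w * (w::'f)) = (\<Sum>w\<in>W. c'' w * w)"
    by (intro exI[of _ "\<lambda>w. r * c w"]) (auto intro: Fq_mult simp: sum_distrib_left mult.assoc)
qed

lemma span_sum: "(\<And>i. i \<in> I \<Longrightarrow> (h i :: 'f) \<in> span q W) \<Longrightarrow> (\<Sum>i\<in>I. h i) \<in> span q W"
  by (induction I rule: infinite_finite_induct) (auto intro: span_zero span_add)

lemma span_mono:
  assumes "W \<subseteq> W'" "finite W'" "(a::'f) \<in> span q W"
  shows "a \<in> span q W'"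
proof -
  from assms(3) obtain c where c: "\<forall>w\<in>W. c w \<in> Fq q" "a = (\<Sum>w\<in>W. c w * w)"
    unfolding span_def by auto
  define c' where "c' w = (if w \<in> W then c w else 0)" for w
  have "(\<Sum>w\<in>W'. c' w * w) = (\<Sum>w\<in>W. c' w * w)"
    using assms(1,2) by (intro sum.mono_neutral_right) (auto simp: c'_def)
  also have "\<dots> = a" using c by (simp add: c'_def)
  finally show ?thesis unfolding span_def using c Fq_zero[OF qp]
    by (intro CollectI exI[of _ c']) (auto simp: c'_def)
qed

lemma span_base:
  assumes "finite W" "(w::'f) \<in> W"
  shows "w \<in> span q W"
proof -
  define c where "c v = (if v = w then 1 else 0 :: 'f)" for v
  have "(\<Sum>v\<in>W. c v * v) = (\<Sum>v\<in>W. if v = w then w else 0)"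
    by (intro sum.cong) (auto simp: c_def)
  also have "\<dots> = w" using assms by simp
  finally have "(\<Sum>v\<in>W. c v * v) = w" .
  then show ?thesis unfolding span_def using Fq_zero[OF qp] Fq_one
    by (intro CollectI exI[of _ c]) (auto simp: c_def)
qed

lemma span_card:
  assumes "finite W"
  shows "card (span q (W::'f set)) \<le> card (Fq q :: 'f set) ^ card W"
proof -
  have "span q W \<subseteq> (\<lambda>c. \<Sum>w\<in>W. c w * w) ` (PiE W (\<lambda>_. Fq q))"
  proof
    fix v assume "v \<in> span q W"
    then obtain c where c: "\<forall>w\<in>W. c w \<in> Fq q" "v = (\<Sum>w\<in>W. c w * w)"
      unfolding span_def by auto
    have "restrict c W \<in> PiE W (\<lambda>_. Fq q)" using c by auto
    moreover have "v = (\<Sum>w\<in>W. restrict c W w * w)" using c by simp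
    ultimately show "v \<in> (\<lambda>c. \<Sum>w\<in>W. c w * w) ` (PiE W (\<lambda>_. Fq q))" by blast
  qed
  then have "card (span q W) \<le> card ((\<lambda>c. \<Sum>w\<in>W. c w * w) ` (PiE W (\<lambda>_. Fq q)))"
    by (intro card_mono) auto
  also have "\<dots> \<le> card (PiE W (\<lambda>_. Fq q :: 'f set))" by (rule card_image_le) (auto intro: finite_PiE assms)
  also have "\<dots> = card (Fq q :: 'f set) ^ card W" using assms by (simp add: card_PiE)
  finally show ?thesis .
qed

end

lemma repair_diff:
  "repair_out \<alpha> \<beta> Sdl Rec i D x a - repair_out \<alpha> \<beta> Sdl Rec i D y a =
   (\<Sum>h\<in>D. \<Sum>l<\<beta>. Rec i D h a l * (\<Sum>b<\<alpha>. Sdl i D h l b * (x h b - y h b)))"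
  unfolding repair_out_def by (simp add: right_diff_distrib sum_subtractf)

lemma reach_inv:
  fixes c :: "nat \<Rightarrow> 'f::{finite,field}"
  assumes qp: "q = CHAR('f) ^ e"
    and rep: "opt_repair q n k \<alpha> d \<beta> G Sdl Rec"
    and r: "reach n d \<alpha> \<beta> Sdl Rec (arr_enc \<alpha> k G c) x A"
  shows "finite A \<and> (\<exists>W. finite W \<and> card W \<le> card A * \<alpha> \<and>
           (\<forall>j a. a < \<alpha> \<longrightarrow> x j a - arr_enc \<alpha> k G c j a \<in> span q W))"
  using r
proof (induction rule: reach.induct)
  case init
  then show ?case using span_zero[OF qp] by (intro conjI exI[of _ "{}"]) auto
next
  case (inject x A j e')
  let ?x0 = "arr_enc \<alpha> k G c"
  from inject.IH obtain W where W: "finite A" "finite W" "card W \<le> card A * \<alpha>"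
    "\<forall>j a. a < \<alpha> \<longrightarrow> x j a - ?x0 j a \<in> span q W" by blast
  define W' where "W' = W \<union> e' ` {..<\<alpha>}"
  have fW': "finite W'" using W by (simp add: W'_def)
  have sub: "W \<subseteq> W'" by (simp add: W'_def)
  have "card W' \<le> card W + card (e' ` {..<\<alpha>})" unfolding W'_def by (rule card_Un_le)
  also have "\<dots> \<le> card A * \<alpha> + \<alpha>" using W(3) card_image_le[of "{..<\<alpha>}" e'] by simp
  also have "\<dots> = card (insert j A) * \<alpha>"
    using card_insert_disjoint[OF W(1) inject.hyps(3)] by simp
  finally have cW': "card W' \<le> card (insert j A) * \<alpha>" .
  have sp: "(x(j := (\<lambda>a. x j a + e' a))) j' a - ?x0 j' a \<in> span q W'" if "a < \<alpha>" for j' a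
  proof (cases "j' = j")
    case True
    have "x j a - ?x0 j a \<in> span q W'"
      by (rule span_mono[OF qp sub fW' W(4)[rule_format, OF that]])
    moreover have "e' a \<in> W'" using that by (simp add: W'_def)
    then have "e' a \<in> span q W'" by (rule span_base[OF qp fW'])
    ultimately have "(x j a - ?x0 j a) + e' a \<in> span q W'" by (rule span_add[OF qp])
    moreover have "(x(j := (\<lambda>a. x j a + e' a))) j' a - ?x0 j' a = (x j a - ?x0 j a) + e' a"
      using True by simp
    ultimately show ?thesis by simp
  next
    case False
    then have "(x(j := (\<lambda>a. x j a + e' a))) j' a - ?x0 j' a = x j' a - ?x0 j' a" by simp
    also have "\<dots> \<in> span q W'" by (rule span_mono[OF qp sub fW' W(4)[rule_format, OF that]])
    finally show ?thesis .
  qed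
  show ?case using W(1) fW' cW' sp by (intro conjI exI[of _ W']) auto
next
  case (repair x A i D)
  let ?x0 = "arr_enc \<alpha> k G c"
  from repair.IH obtain W where W: "finite A" "finite W" "card W \<le> card A * \<alpha>"
    "\<forall>j a. a < \<alpha> \<longrightarrow> x j a - ?x0 j a \<in> span q W" by blast
  have sp: "(x(i := repair_out \<alpha> \<beta> Sdl Rec i D x)) j' a - ?x0 j' a \<in> span q W" if "a < \<alpha>" for j' a
  proof (cases "j' = i")
    case True
    have ex: "repair_out \<alpha> \<beta> Sdl Rec i D ?x0 a = ?x0 i a"
      using rep repair.hyps that unfolding opt_repair_def by blast
    have "repair_out \<alpha> \<beta> Sdl Rec i D x a - ?x0 i a =
          (\<Sum>h\<in>D. \<Sum>l<\<beta>. Rec i D h a l * (\<Sum>b<\<alpha>. Sdl i D h l b * (x h b - ?x0 h b)))"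
      using repair_diff[of \<alpha> \<beta> Sdl Rec i D x a ?x0] ex by simp
    also have "\<dots> \<in> span q W"
      using rep W(4) unfolding opt_repair_def
      by (intro span_sum[OF qp] span_smul[OF qp]) auto
    finally show ?thesis using True by simp
  next
    case False
    then show ?thesis using W(4) that by auto
  qed
  show ?case using W sp by (intro conjI exI[of _ W]) auto
qed

lemma arr_enc_span:
  fixes c :: "nat \<Rightarrow> 'f::{finite,field}"
  assumes qp: "q = CHAR('f) ^ e"
    and G_Fq: "\<forall>r<k * \<alpha>. \<forall>s<n * \<alpha>. G r s \<in> Fq q"
    and j: "j < n" and a: "a < \<alpha>"
    and c: "\<forall>r<k * \<alpha>. c r \<in> span q W"
  shows "arr_enc \<alpha> k G c j a \<in> span q W"
proof -
  have "j * \<alpha> + a < n * \<alpha>"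
  proof -
    have "j * \<alpha> + a < j * \<alpha> + \<alpha>" using a by simp
    also have "\<dots> = Suc j * \<alpha>" by simp
    also have "\<dots> \<le> n * \<alpha>" using j by (intro mult_right_mono) auto
    finally show ?thesis .
  qed
  then have "\<And>r. r \<in> {..<k * \<alpha>} \<Longrightarrow> G r (j * \<alpha> + a) * c r \<in> span q W"
    using G_Fq c by (intro span_smul[OF qp]) auto
  then have "(\<Sum>r<k * \<alpha>. G r (j * \<alpha> + a) * c r) \<in> span q W"
    by (rule span_sum[OF qp])
  then show ?thesis unfolding arr_enc_def by (simp add: mult.commute)
qed

lemma mds_inv:
  fixes dv :: "nat \<Rightarrow> 'f::{finite,field}"
  assumes qp: "q = CHAR('f) ^ e"
    and G_Fq: "\<forall>r<k * \<alpha>. \<forall>s<n * \<alpha>. G r s \<in> Fq q"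
    and mds: "MDS_array n k \<alpha> G"
    and S: "S \<subseteq> {..<n}" "card S = k"
    and hyp: "\<forall>j\<in>S. \<forall>a<\<alpha>. arr_enc \<alpha> k G dv j a \<in> span q W"
  shows "\<forall>r<k * \<alpha>. dv r \<in> span q W"
proof -
  let ?V = "span q W"
  define AS where "AS = PiE {..<k * \<alpha>} (\<lambda>_. ?V)"
  define BS where "BS = PiE (S \<times> {..<\<alpha>}) (\<lambda>_. ?V)"
  define L where "L c = restrict (\<lambda>(j,a). arr_enc \<alpha> k G c j a) (S \<times> {..<\<alpha>})" for c
  have mdsS: "\<And>c c'. (\<forall>j\<in>S. \<forall>a<\<alpha>. arr_enc \<alpha> k G c j a = arr_enc \<alpha> k G c' j a)
      \<Longrightarrow> \<forall>r<k * \<alpha>. c r = c' r"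
    using mds S unfolding MDS_array_def by blast
  have finS: "finite S" using S(1) finite_subset by blast
  have LA: "L ` AS \<subseteq> BS"
  proof
    fix y assume "y \<in> L ` AS"
    then obtain c where c: "c \<in> AS" "y = L c" by blast
    have "\<forall>r<k * \<alpha>. c r \<in> ?V" using c(1) unfolding AS_def by auto
    then have "arr_enc \<alpha> k G c j a \<in> ?V" if "j \<in> S" "a < \<alpha>" for j a
      using that S(1) by (intro arr_enc_span[OF qp G_Fq]) auto
    then show "y \<in> BS" unfolding c(2) L_def BS_def by auto
  qed
  have inj: "inj_on L AS"
  proof (rule inj_onI)
    fix c c' assume cc: "c \<in> AS" "c' \<in> AS" "L c = L c'"
    have "arr_enc \<alpha> k G c j a = arr_enc \<alpha> k G c' j a" if "j \<in> S" "a < \<alpha>" for j a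
    proof -
      have "L c (j, a) = L c' (j, a)" using cc(3) by simp
      then show ?thesis using that unfolding L_def by simp
    qed
    then have "\<forall>r<k * \<alpha>. c r = c' r" using mdsS by blast
    then show "c = c'" using cc(1,2) unfolding AS_def by (intro PiE_ext) auto
  qed
  have cAS: "card AS = card ?V ^ (k * \<alpha>)" unfolding AS_def by (simp add: card_PiE)
  have cBS: "card BS = card ?V ^ (k * \<alpha>)" unfolding BS_def using finS S(2)
    by (simp add: card_PiE card_cartesian_product)
  have fBS: "finite BS" unfolding BS_def using finS by (intro finite_PiE) auto
  have "L ` AS = BS"
    by (rule card_subset_eq[OF fBS LA]) (simp add: card_image[OF inj] cAS cBS)
  moreover have "L dv \<in> BS" using hyp unfolding L_def BS_def by auto
  ultimately obtain c where c: "c \<in> AS" "L c = L dv" by (metis imageE)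
  have "arr_enc \<alpha> k G c j a = arr_enc \<alpha> k G dv j a" if "j \<in> S" "a < \<alpha>" for j a
  proof -
    have "L c (j, a) = L dv (j, a)" using c(2) by simp
    then show ?thesis using that unfolding L_def by simp
  qed
  then have "\<forall>r<k * \<alpha>. c r = dv r" using mdsS by blast
  then show ?thesis using c(1) unfolding AS_def by (metis PiE_mem lessThan_iff)
qed

lemma gab_unique:
  fixes w g :: "nat \<Rightarrow> 'f::{finite,field}"
  assumes qp: "q = CHAR('f) ^ e"
    and card: "card (UNIV :: 'f set) = q ^ N" and N: "0 < N"
    and g_indep: "Fq_indep q m g"
    and W: "finite W" "card W \<le> m - K" and KM: "K \<le> m"
    and hyp: "\<forall>r<m. (\<Sum>j<K. w j * g r ^ (q ^ j)) \<in> span q W"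
  shows "\<forall>j<K. w j = 0"
proof (rule ccontr)
  assume "\<not> (\<forall>j<K. w j = 0)"
  then obtain j0 where j0: "j0 < K" "w j0 \<noteq> 0" by blast
  define s where "s = card (Fq q :: 'f set)"
  have q2: "2 \<le> q" by (rule q_ge2[OF card])
  have sq: "q \<le> s" unfolding s_def by (rule card_Fq_ge[OF card N qp])
  define Lw where "Lw y = (\<Sum>j<K. w j * y ^ (q ^ j))" for y
  have Lw_diff: "Lw (y - z) = Lw y - Lw z" for y z
    unfolding Lw_def by (simp add: frob_diff[OF qp] right_diff_distrib sum_subtractf)
  define \<Psi> where "\<Psi> c = (\<Sum>r<m. c r * g r)" for c
  define PS where "PS = PiE {..<m} (\<lambda>_. Fq q :: 'f set)"
  have Lw_lin: "Lw (\<Psi> c) = (\<Sum>r<m. c r * Lw (g r))" if "c \<in> PS" for c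
  proof -
    have cF: "\<And>r. r < m \<Longrightarrow> c r \<in> Fq q" using that unfolding PS_def by auto
    have "Lw (\<Psi> c) = (\<Sum>j<K. w j * (\<Sum>r<m. (c r * g r) ^ (q ^ j)))"
      unfolding Lw_def \<Psi>_def by (simp add: frob_sum[OF qp])
    also have "\<dots> = (\<Sum>j<K. w j * (\<Sum>r<m. c r * g r ^ (q ^ j)))"
      using cF by (intro sum.cong refl arg_cong2[where f="(*)"]) (auto simp: power_mult_distrib Fq_pow)
    also have "\<dots> = (\<Sum>j<K. \<Sum>r<m. c r * (w j * g r ^ (q ^ j)))"
      by (simp add: sum_distrib_left mult_ac)
    also have "\<dots> = (\<Sum>r<m. \<Sum>j<K. c r * (w j * g r ^ (q ^ j)))"
      by (rule sum.swap)
    also have "\<dots> = (\<Sum>r<m. c r * Lw (g r))"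
      unfolding Lw_def by (simp add: sum_distrib_left)
    finally show ?thesis .
  qed
  have inj: "inj_on \<Psi> PS"
  proof (rule inj_onI)
    fix c c' assume cc: "c \<in> PS" "c' \<in> PS" "\<Psi> c = \<Psi> c'"
    have "(\<Sum>r<m. (c r - c' r) * g r) = \<Psi> c - \<Psi> c'"
      unfolding \<Psi>_def by (simp add: left_diff_distrib sum_subtractf)
    then have z: "(\<Sum>r<m. (c r - c' r) * g r) = 0" using cc(3) by simp
    have "\<forall>r<m. c r - c' r \<in> Fq q"
    proof (intro allI impI)
      fix r assume "r < m"
      then have "c r \<in> Fq q" "c' r \<in> Fq q" using cc(1,2) unfolding PS_def by auto
      then show "c r - c' r \<in> Fq q" by (rule Fq_diff[OF qp])
    qed
    then have "\<forall>r<m. c r - c' r = 0"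
      using g_indep[unfolded Fq_indep_def, rule_format, of "\<lambda>r. c r - c' r"] z by blast
    then show "c = c'" using cc(1,2) unfolding PS_def by (intro PiE_ext) auto
  qed
  have cP: "card (\<Psi> ` PS) = s ^ m"
    using card_image[OF inj] unfolding PS_def s_def by (simp add: card_PiE)
  have img: "Lw y \<in> span q W" if yP: "y \<in> \<Psi> ` PS" for y
  proof -
    obtain c where c: "c \<in> PS" "y = \<Psi> c" using yP by blast
    have "\<And>r. r \<in> {..<m} \<Longrightarrow> c r * Lw (g r) \<in> span q W"
      using c(1) hyp unfolding PS_def Lw_def by (intro span_smul[OF qp]) auto
    then have "(\<Sum>r<m. c r * Lw (g r)) \<in> span q W" by (rule span_sum[OF qp])
    then show ?thesis using Lw_lin[OF c(1)] c(2) by simp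
  qed
  have roots: "card {z. Lw z = 0} \<le> q ^ (K - 1)"
    unfolding Lw_def by (rule lin_roots[of q j0 K w, OF q2 j0])
  have fib: "card {y \<in> \<Psi> ` PS. Lw y = v} \<le> q ^ (K - 1)" for v
  proof (cases "{y \<in> \<Psi> ` PS. Lw y = v} = {}")
    case True then show ?thesis by (simp only: card.empty)
  next
    case False
    then obtain y0 where y0: "y0 \<in> \<Psi> ` PS" "Lw y0 = v" by blast
    have "{y \<in> \<Psi> ` PS. Lw y = v} \<subseteq> (\<lambda>z. y0 + z) ` {z. Lw z = 0}"
    proof
      fix y assume "y \<in> {y \<in> \<Psi> ` PS. Lw y = v}"
      then have "Lw (y - y0) = 0" using y0 Lw_diff by simp
      then show "y \<in> (\<lambda>z. y0 + z) ` {z. Lw z = 0}" by (intro rev_image_eqI[of "y - y0"]) auto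
    qed
    then have "card {y \<in> \<Psi> ` PS. Lw y = v} \<le> card ((\<lambda>z. y0 + z) ` {z. Lw z = 0})"
      by (intro card_mono) auto
    also have "\<dots> \<le> card {z. Lw z = 0}" by (rule card_image_le) auto
    finally show ?thesis using roots by simp
  qed
  have "\<Psi> ` PS \<subseteq> (\<Union>v\<in>span q W. {y \<in> \<Psi> ` PS. Lw y = v})" using img by blast
  then have "s ^ m \<le> card (\<Union>v\<in>span q W. {y \<in> \<Psi> ` PS. Lw y = v})"
    unfolding cP[symmetric] by (intro card_mono) auto
  also have "\<dots> \<le> (\<Sum>v\<in>span q W. card {y \<in> \<Psi> ` PS. Lw y = v})" by (rule card_UN_le) auto
  also have "\<dots> \<le> (\<Sum>v\<in>span q W. q ^ (K - 1))" by (rule sum_mono) (rule fib)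
  also have "\<dots> = card (span q W) * q ^ (K - 1)" by simp
  also have "\<dots> \<le> s ^ card W * q ^ (K - 1)"
    unfolding s_def by (intro mult_right_mono span_card[OF qp W(1)]) auto
  also have "\<dots> \<le> s ^ (m - K) * s ^ (K - 1)"
    using q2 sq W(2) by (intro mult_mono power_increasing power_mono) auto
  also have "\<dots> = s ^ (m - 1)" using j0 KM by (simp add: power_add[symmetric])
  finally have "s ^ m \<le> s ^ (m - 1)" .
  moreover have "s ^ (m - 1) < s ^ m" using q2 sq j0 KM by (intro power_strict_increasing) auto
  ultimately show False by simp
qed

lemma arr_enc_diff:
  "arr_enc \<alpha> k G (\<lambda>r. c r - c' r) j a = arr_enc \<alpha> k G c j a - arr_enc \<alpha> k G c' j a"
  unfolding arr_enc_def by (simp add: left_diff_distrib sum_subtractf)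

lemma gab_enc_diff:
  "gab_enc q K g u r - gab_enc q K g u' r = (\<Sum>j<K. (u j - u' j) * g r ^ (q ^ j))"
  unfolding gab_enc_def by (simp add: left_diff_distrib sum_subtractf)

lemma uniq:
  fixes g :: "nat \<Rightarrow> 'f::{finite,field}"
  assumes qp: "q = CHAR('f) ^ e"
    and card_field: "card (UNIV :: 'f set) = q ^ N" and N: "0 < N"
    and KM: "K \<le> m"
    and m_eq: "m = \<alpha> * k"
    and g_indep: "Fq_indep q m g"
    and G_Fq: "\<forall>r<k * \<alpha>. \<forall>s<n * \<alpha>. G r s \<in> Fq q"
    and mds: "MDS_array n k \<alpha> G"
    and rep: "opt_repair q n k \<alpha> d \<beta> G Sdl Rec"
    and bound: "2 * t * \<alpha> + 1 \<le> m - K + 1"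
    and S: "S \<subseteq> {..<n}" "card S = k"
    and r1: "reach n d \<alpha> \<beta> Sdl Rec (arr_enc \<alpha> k G (gab_enc q K g u)) x A" "card A = t"
    and r2: "reach n d \<alpha> \<beta> Sdl Rec (arr_enc \<alpha> k G (gab_enc q K g u')) x' A'" "card A' = t"
    and obs: "\<forall>j\<in>S. \<forall>a<\<alpha>. x j a = x' j a"
  shows "\<forall>i<K. u i = u' i"
proof -
  let ?c = "gab_enc q K g u" and ?c' = "gab_enc q K g u'"
  obtain W where W: "finite W" "card W \<le> t * \<alpha>"
    "\<forall>j a. a < \<alpha> \<longrightarrow> x j a - arr_enc \<alpha> k G ?c j a \<in> span q W"
    using reach_inv[OF qp rep r1(1)] r1(2) by blast
  obtain W' where W': "finite W'" "card W' \<le> t * \<alpha>"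
    "\<forall>j a. a < \<alpha> \<longrightarrow> x' j a - arr_enc \<alpha> k G ?c' j a \<in> span q W'"
    using reach_inv[OF qp rep r2(1)] r2(2) by blast
  define U where "U = W \<union> W'"
  have fU: "finite U" using W(1) W'(1) by (simp add: U_def)
  have "card U \<le> card W + card W'" unfolding U_def by (rule card_Un_le)
  also have "\<dots> \<le> m - K" using W(2) W'(2) bound by simp
  finally have cU: "card U \<le> m - K" .
  have "\<forall>j\<in>S. \<forall>a<\<alpha>. arr_enc \<alpha> k G (\<lambda>r. ?c r - ?c' r) j a \<in> span q U"
  proof (intro ballI allI impI)
    fix j a assume ja: "j \<in> S" "a < \<alpha>"
    have e1: "x j a - arr_enc \<alpha> k G ?c j a \<in> span q U"
      by (rule span_mono[OF qp _ fU W(3)[rule_format, OF ja(2)]]) (simp add: U_def)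
    have e2: "x' j a - arr_enc \<alpha> k G ?c' j a \<in> span q U"
      by (rule span_mono[OF qp _ fU W'(3)[rule_format, OF ja(2)]]) (simp add: U_def)
    have "arr_enc \<alpha> k G (\<lambda>r. ?c r - ?c' r) j a =
          (x' j a - arr_enc \<alpha> k G ?c' j a) - (x j a - arr_enc \<alpha> k G ?c j a)"
      using obs ja by (simp add: arr_enc_diff)
    also have "\<dots> \<in> span q U" by (rule span_diff[OF qp e2 e1])
    finally show "arr_enc \<alpha> k G (\<lambda>r. ?c r - ?c' r) j a \<in> span q U" .
  qed
  then have "\<forall>r<k * \<alpha>. ?c r - ?c' r \<in> span q U"
    using mds_inv[OF qp G_Fq mds S] by blast
  then have "\<forall>r<m. (\<Sum>j<K. (u j - u' j) * g r ^ (q ^ j)) \<in> span q U"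
    using m_eq by (simp add: gab_enc_diff mult.commute)
  then have "\<forall>j<K. u j - u' j = 0"
    by (rule gab_unique[OF qp card_field N g_indep fU cU KM])
  then show ?thesis by simp
qed

theorem theorem1:
  fixes q N K m \<alpha> k n d \<beta> t :: nat
    and g :: "nat \<Rightarrow> 'f::{finite,field}"
    and G :: "nat \<Rightarrow> nat \<Rightarrow> 'f"
    and Sdl Rec :: "nat \<Rightarrow> nat set \<Rightarrow> nat \<Rightarrow> nat \<Rightarrow> nat \<Rightarrow> 'f"
  assumes card_field: "card (UNIV :: 'f set) = q ^ N"
    and KN: "K < N" and KM: "K \<le> m" and mN: "m \<le> N"
    and pos: "0 < \<alpha>" "0 < k"
    and m_eq: "m = \<alpha> * k"
    and g_indep: "Fq_indep q m g"
    and G_Fq: "\<forall>r<k * \<alpha>. \<forall>s<n * \<alpha>. G r s \<in> Fq q"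
    and mds: "MDS_array n k \<alpha> G"
    and rep: "opt_repair q n k \<alpha> d \<beta> G Sdl Rec"
    and bound: "2 * t * \<alpha> + 1 \<le> m - K + 1"
  shows "\<exists>dec :: nat set \<Rightarrow> (nat \<Rightarrow> nat \<Rightarrow> 'f) \<Rightarrow> nat \<Rightarrow> 'f.
           \<forall>S u x A. S \<subseteq> {..<n} \<and> card S = k \<and>
             reach n d \<alpha> \<beta> Sdl Rec (arr_enc \<alpha> k G (gab_enc q K g u)) x A \<and> card A = t
             \<longrightarrow> (\<forall>i<K. dec S (\<lambda>j a. if j \<in> S \<and> a < \<alpha> then x j a else 0) i = u i)"
proof -
  have N: "0 < N" using KN by simp
  obtain e where qp: "q = CHAR('f) ^ e" using q_char_power[OF card_field N] by blast
  define P where "P S y u \<longleftrightarrow> (\<exists>x A. reach n d \<alpha> \<beta> Sdl Rec (arr_enc \<alpha> k G (gab_enc q K g u)) x A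
      \<and> card A = t \<and> (\<lambda>j a. if j \<in> S \<and> a < \<alpha> then x j a else 0) = y)" for S y u
  define dec where "dec S y = (SOME u. P S y u)" for S y
  show ?thesis
  proof (intro exI[of _ dec] allI impI)
    fix S u x A i
    assume h: "S \<subseteq> {..<n} \<and> card S = k \<and>
             reach n d \<alpha> \<beta> Sdl Rec (arr_enc \<alpha> k G (gab_enc q K g u)) x A \<and> card A = t"
      and i: "i < K"
    define y where "y = (\<lambda>j a. if j \<in> S \<and> a < \<alpha> then x j a else (0::'f))"
    have "P S y u" unfolding P_def y_def using h by blast
    then have "P S y (dec S y)" unfolding dec_def by (rule someI[of "P S y"])
    then obtain x' A' where x': "reach n d \<alpha> \<beta> Sdl Rec (arr_enc \<alpha> k G (gab_enc q K g (dec S y))) x' A'"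
      "card A' = t" "(\<lambda>j a. if j \<in> S \<and> a < \<alpha> then x' j a else 0) = y"
      unfolding P_def by blast
    have obs: "\<forall>j\<in>S. \<forall>a<\<alpha>. x j a = x' j a"
    proof (intro ballI allI impI)
      fix j a assume "j \<in> S" "a < \<alpha>"
      then show "x j a = x' j a" using fun_cong[OF fun_cong[OF x'(3), of j], of a]
        unfolding y_def by simp
    qed
    have "\<forall>i<K. u i = dec S y i"
      by (rule uniq[OF qp card_field N KM m_eq g_indep G_Fq mds rep bound _ _ _ _ x'(1) x'(2) obs])
         (use h in auto)
    then show "dec S (\<lambda>j a. if j \<in> S \<and> a < \<alpha> then x j a else 0) i = u i"
      using i unfolding y_def by simp
  qed
qed

end
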